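(* Let $K$ be an algebraically closed field and let $m,m_1,m_2,r\ge0$ be integers with $r$ even and $m=m_1+m_2$. For each $k$, let $X_k$ denote the variety of skew-symmetric $k\times k$ matrices over $K$ of rank at most $r$. Then the map $X_m\to X_{m_1}\times X_{m_2}$ sending a matrix to its pair of diagonal blocks (the upper-left $m_1\times m_1$ block and the lower-right $m_2\times m_2$ block) is surjective. *)

theory Defs
  imports "HOL-Computational_Algebra.Polynomial" "Jordan_Normal_Form.DL_Rank"
begin

definition skew_rank_var :: "nat \<Rightarrow> nat \<Rightarrow> 'a::field mat set" where
  "skew_rank_var r k = {A. A \<in> carrier_mat k k \<and> transpose_mat A = - A
      \<and> (\<forall>i<k. A $$ (i,i) = 0) \<and> vec_space.rank k A \<le> r}"

definition upper_left_block :: "nat \<Rightarrow> 'a mat \<Rightarrow> 'a mat" where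
  "upper_left_block m1 A = mat m1 m1 (\<lambda>(i,j). A $$ (i,j))"

definition lower_right_block :: "nat \<Rightarrow> nat \<Rightarrow> 'a mat \<Rightarrow> 'a mat" where
  "lower_right_block m1 m2 A = mat m2 m2 (\<lambda>(i,j). A $$ (m1 + i, m1 + j))"

end

theory Submission
  imports Defs
begin

lemma rank_sum_le:
  fixes F G :: "nat \<Rightarrow> nat \<Rightarrow> 'a::field"
  assumes "finite L"
  shows "A \<in> carrier_mat n nc \<Longrightarrow> (\<forall>i<n. \<forall>j<nc. A $$ (i,j) = (\<Sum>l\<in>L. F i l * G l j))
     \<Longrightarrow> vec_space.rank n A \<le> card L"
  using assms
proof (induction L arbitrary: A rule: finite_induct)
  case empty
  then have "A = 0\<^sub>m n nc" by (intro eq_matI) auto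
  then show ?case using vec_space.rank_0I by simp
next
  case (insert k L)
  define A1 where "A1 = mat n nc (\<lambda>(i,j). \<Sum>l\<in>L. F i l * G l j)"
  define A2 where "A2 = mat n nc (\<lambda>(i,j). F i k * G k j)"
  have c1: "A1 \<in> carrier_mat n nc" "A2 \<in> carrier_mat n nc" unfolding A1_def A2_def by auto
  have "A = A1 + A2" using insert.prems insert.hyps
    by (intro eq_matI) (auto simp: A1_def A2_def add.commute)
  then have "vec_space.rank n A \<le> vec_space.rank n A1 + vec_space.rank n A2"
    using vec_space.rank_subadditive[OF c1] by simp
  moreover have "vec_space.rank n A1 \<le> card L"
    using insert.IH[OF c1(1)] unfolding A1_def by auto
  moreover have "vec_space.rank n A2 \<le> 1"
    by (rule vec_space.rank_le_1_product_entries[OF c1(2), of "\<lambda>i. F i k" "\<lambda>j. G k j"])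
      (auto simp: A2_def)
  ultimately show ?case using insert.hyps by simp
qed

lemma drop_one:
  fixes F G B :: "nat \<Rightarrow> nat \<Rightarrow> 'a::field" and x :: "nat \<Rightarrow> 'a"
  assumes L: "finite L" and k: "k \<in> L" and xk: "x k \<noteq> 0"
    and ker: "\<forall>i<n. (\<Sum>l\<in>L. F i l * x l) = 0"
    and rep: "\<forall>i<n. \<forall>j<nc. B i j = (\<Sum>l\<in>L. F i l * G l j)"
  shows "\<exists>G'. \<forall>i<n. \<forall>j<nc. B i j = (\<Sum>l\<in>L-{k}. F i l * G' l j)"
proof (intro exI allI impI)
  fix i j assume i: "i < n" and j: "j < nc"
  have s1: "(\<Sum>l\<in>L-{k}. F i l * G l j) = B i j - F i k * G k j"
    using rep i j sum.remove[OF L k, of "\<lambda>l. F i l * G l j"] by simp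
  have s2: "(\<Sum>l\<in>L-{k}. F i l * x l) = - F i k * x k"
    using ker i sum.remove[OF L k, of "\<lambda>l. F i l * x l"] by (simp add: eq_neg_iff_add_eq_0 add.commute)
  have "(\<Sum>l\<in>L-{k}. F i l * (G l j - x l / x k * G k j))
      = (\<Sum>l\<in>L-{k}. F i l * G l j) - (G k j / x k) * (\<Sum>l\<in>L-{k}. F i l * x l)"
    by (simp add: sum_subtractf sum_distrib_left algebra_simps)
  also have "\<dots> = B i j" using s1 s2 xk by (simp add: field_simps)
  finally show "B i j = (\<Sum>l\<in>L-{k}. F i l * (G l j - x l / x k * G k j))" by simp
qed

lemma rank_rep:
  fixes A :: "'a::field mat"
  assumes A: "A \<in> carrier_mat n nc" and r: "vec_space.rank n A \<le> r"
  shows "\<exists>L F G. finite L \<and> card L \<le> r \<and>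
     (\<forall>i<n. \<forall>j<nc. A $$ (i,j) = (\<Sum>l\<in>(L::nat set). F i l * G l j))"
proof -
  interpret V: vec_space "TYPE('a)" n .
  define P where "P L = (L \<subseteq> {..<nc} \<and> (\<exists>G. \<forall>i<n. \<forall>j<nc. A $$ (i,j) = (\<Sum>l\<in>L. A $$ (i,l) * G l j)))" for L
  have "P {..<nc}" unfolding P_def
  proof (intro conjI exI allI impI)
    fix i j assume "i < n" "j < nc"
    have "(\<Sum>l\<in>{..<nc}. A $$ (i,l) * (if l = j then 1 else 0)) = (\<Sum>l\<in>{..<nc}. if l = j then A $$ (i,l) else 0)"
      by (rule sum.cong) auto
    then show "A $$ (i,j) = (\<Sum>l\<in>{..<nc}. A $$ (i,l) * (if l = j then 1 else 0))"
      using \<open>j < nc\<close> by (simp add: sum.delta)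
  qed simp
  then obtain L0 where P0: "P L0" and min: "\<And>L. P L \<Longrightarrow> card L0 \<le> card L"
    using ex_has_least_nat[of P "{..<nc}" card] by blast
  from P0 obtain G where L0: "L0 \<subseteq> {..<nc}" and G: "\<forall>i<n. \<forall>j<nc. A $$ (i,j) = (\<Sum>l\<in>L0. A $$ (i,l) * G l j)"
    unfolding P_def by blast
  have finL0: "finite L0" using L0 finite_subset by blast
  have nokernel: False if k: "k \<in> L0" and xk: "x k \<noteq> 0" and ker: "\<forall>i<n. (\<Sum>l\<in>L0. A $$ (i,l) * x l) = 0" for k x
  proof -
    obtain G' where "\<forall>i<n. \<forall>j<nc. A $$ (i,j) = (\<Sum>l\<in>L0-{k}. A $$ (i,l) * G' l j)"
      using drop_one[OF finL0 k xk ker, where B = "\<lambda>i j. A $$ (i,j)"] G by blast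
    then have "P (L0 - {k})" unfolding P_def using L0 by blast
    then have "card L0 \<le> card (L0 - {k})" by (rule min)
    then show False using finL0 k by (metis card_Diff1_less leD)
  qed
  have inj: "inj_on (col A) L0"
  proof (rule inj_onI)
    fix l1 l2 assume l1: "l1 \<in> L0" and l2: "l2 \<in> L0" and eq: "col A l1 = col A l2"
    show "l1 = l2"
    proof (rule ccontr)
    assume ne: "l1 \<noteq> l2"
    define x where "x l = (if l = l1 then 1 else if l = l2 then -1 else (0::'a))" for l
    have K: "\<forall>i<n. (\<Sum>l\<in>L0. A $$ (i,l) * x l) = 0"
    proof (intro allI impI)
      fix i assume i: "i < n"
      have "A $$ (i,l1) = A $$ (i,l2)"
        using arg_cong[OF eq, of "\<lambda>v. v $ i"] i A l1 l2 L0 by (auto simp: subset_iff)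
      moreover have "(\<Sum>l\<in>L0. A $$ (i,l) * x l) = A $$ (i,l1) - A $$ (i,l2)"
      proof -
        have "(\<Sum>l\<in>L0. A $$ (i,l) * x l) = (\<Sum>l\<in>L0. (if l = l1 then A $$ (i,l1) else 0) + (if l = l2 then - A $$ (i,l2) else 0))"
          by (rule sum.cong) (auto simp: x_def ne)
        also have "\<dots> = A $$ (i,l1) - A $$ (i,l2)" using l1 l2 finL0 by (simp add: sum.distrib)
        finally show ?thesis .
      qed
      ultimately show "(\<Sum>l\<in>L0. A $$ (i,l) * x l) = 0" by simp
    qed
    have xl1: "x l1 \<noteq> 0" unfolding x_def if_P[OF refl] by (rule one_neq_zero)
    show False by (rule nokernel[of l1 x, OF l1 xl1 K])
    qed
  qed
  define U where "U = col A ` L0"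
  have Usub: "U \<subseteq> set (cols A)" unfolding U_def using L0 A by (auto simp: cols_def)
  have Ucar: "U \<subseteq> carrier_vec n" unfolding U_def using A by auto
  have "V.lin_indpt U"
  proof
    assume ld: "V.lin_dep U"
    have "finite U" unfolding U_def using finL0 by simp
    from V.finite_lin_dep[OF this ld] Ucar obtain a w where
      lc: "V.lincomb a U = 0\<^sub>v n" and w: "w \<in> U" and aw: "a w \<noteq> 0" by auto
    from w obtain k where k: "k \<in> L0" and wk: "w = col A k" unfolding U_def by auto
    have K: "\<forall>i<n. (\<Sum>l\<in>L0. A $$ (i,l) * a (col A l)) = 0"
    proof (intro allI impI)
      fix i assume i: "i < n"
      have "(\<Sum>l\<in>L0. A $$ (i,l) * a (col A l)) = (\<Sum>l\<in>L0. a (col A l) * col A l $ i)"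
        using i A L0 by (intro sum.cong) auto
      also have "\<dots> = (\<Sum>v\<in>U. a v * v $ i)" unfolding U_def
        using sum.reindex[OF inj, of "\<lambda>v. a v * v $ i"] by simp
      also have "\<dots> = V.lincomb a U $ i" using V.lincomb_index[OF i Ucar] by simp
      finally show "(\<Sum>l\<in>L0. A $$ (i,l) * a (col A l)) = 0" using lc i by simp
    qed
    have ak: "a (col A k) \<noteq> 0" using aw unfolding wk .
    show False by (rule nokernel[of k "\<lambda>l. a (col A l)", OF k ak K])
  qed
  then have "card U \<le> V.rank A" using V.rank_ge_card_indpt[OF A Usub] by simp
  moreover have "card U = card L0" unfolding U_def using card_image[OF inj] .
  ultimately have "card L0 \<le> r" using r by simp
  then have cr: "card L0 \<le> r" .
  show ?thesis
    apply (rule exI[of _ L0])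
    apply (rule exI[of _ "\<lambda>i l. A $$ (i,l)"])
    apply (rule exI[of _ G])
    using finL0 G cr by blast
qed

lemma alt_decomp:
  fixes B :: "nat \<Rightarrow> nat \<Rightarrow> 'a::field"
  shows "(\<forall>i<n. B i i = 0) \<Longrightarrow> (\<forall>i<n. \<forall>j<n. B j i = - B i j) \<Longrightarrow> finite L \<Longrightarrow> card L \<le> r
    \<Longrightarrow> (\<forall>i<n. \<forall>j<n. B i j = (\<Sum>l\<in>(L::nat set). F i l * G l j))
    \<Longrightarrow> \<exists>u v. \<forall>i<n. \<forall>j<n. B i j = (\<Sum>k<r div 2. u k i * v k j - v k i * u k j)"
proof (induction r arbitrary: B L F G rule: less_induct)
  case (less r)
  note diag = less.prems(1) and skew = less.prems(2) and finL = less.prems(3)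
    and cardL = less.prems(4) and rep = less.prems(5)
  show ?case
  proof (cases "\<forall>i<n. \<forall>j<n. B i j = 0")
    case True
    show ?thesis
      apply (rule exI[of _ "\<lambda>k i. 0"])
      apply (rule exI[of _ "\<lambda>k i. 0"])
      using True by simp
  next
    case False
    then obtain s t where s: "s < n" and t: "t < n" and c0: "B s t \<noteq> 0" by blast
    define c where "c = B s t"
    have c: "c \<noteq> 0" using c0 c_def by simp
    define a where "a i = B i s" for i
    define b where "b i = B i t" for i
    define F' where "F' i l = F i l + (a i * F t l - b i * F s l) / c" for i l
    define B' where "B' i j = B i j + (b i * a j - a i * b j) / c" for i j
    have rep': "\<forall>i<n. \<forall>j<n. B' i j = (\<Sum>l\<in>L. F' i l * G l j)"
    proof (intro allI impI)
      fix i j assume i: "i < n" and j: "j < n"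
      have "(\<Sum>l\<in>L. F' i l * G l j) = (\<Sum>l\<in>L. F i l * G l j)
          + (a i / c) * (\<Sum>l\<in>L. F t l * G l j) - (b i / c) * (\<Sum>l\<in>L. F s l * G l j)"
        unfolding F'_def by (simp add: sum.distrib sum_subtractf sum_distrib_left algebra_simps diff_divide_distrib)
      also have "\<dots> = B i j + (a i / c) * B t j - (b i / c) * B s j" using rep i j s t by simp
      also have "\<dots> = B' i j"
      proof -
        have "B t j = - B j t" "B s j = - B j s" using skew j s t by blast+
        then show ?thesis unfolding B'_def a_def b_def using c by (simp add: field_simps)
      qed
      finally show "B' i j = (\<Sum>l\<in>L. F' i l * G l j)" by simp
    qed
    define x where "x l = G l s" for l
    define y where "y l = G l t" for l
    have Bts: "B t s = - c" using skew s t unfolding c_def by blast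
    have Bss: "B s s = 0" and Btt: "B t t = 0" using diag s t by blast+
    have kx: "\<forall>i<n. (\<Sum>l\<in>L. F' i l * x l) = 0"
    proof (intro allI impI)
      fix i assume i: "i < n"
      have "(\<Sum>l\<in>L. F' i l * x l) = (\<Sum>l\<in>L. F i l * G l s)
          + (a i / c) * (\<Sum>l\<in>L. F t l * G l s) - (b i / c) * (\<Sum>l\<in>L. F s l * G l s)"
        unfolding F'_def x_def by (simp add: sum.distrib sum_subtractf sum_distrib_left algebra_simps diff_divide_distrib)
      also have "\<dots> = B i s + (a i / c) * B t s - (b i / c) * B s s" using rep i s t by simp
      also have "\<dots> = 0" unfolding a_def b_def
        using Bts Bss Btt c by (simp add: c_def field_simps)
      finally show "(\<Sum>l\<in>L. F' i l * x l) = 0" .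
    qed
    have ky: "\<forall>i<n. (\<Sum>l\<in>L. F' i l * y l) = 0"
    proof (intro allI impI)
      fix i assume i: "i < n"
      have "(\<Sum>l\<in>L. F' i l * y l) = (\<Sum>l\<in>L. F i l * G l t)
          + (a i / c) * (\<Sum>l\<in>L. F t l * G l t) - (b i / c) * (\<Sum>l\<in>L. F s l * G l t)"
        unfolding F'_def y_def by (simp add: sum.distrib sum_subtractf sum_distrib_left algebra_simps diff_divide_distrib)
      also have "\<dots> = B i t + (a i / c) * B t t - (b i / c) * B s t" using rep i s t by simp
      also have "\<dots> = 0" unfolding a_def b_def
        using Bts Bss Btt c by (simp add: c_def field_simps)
      finally show "(\<Sum>l\<in>L. F' i l * y l) = 0" .
    qed
    have Fx: "(\<Sum>l\<in>L. F t l * x l) = - c" unfolding x_def using rep Bts s t by simp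
    have Fy: "(\<Sum>l\<in>L. F s l * y l) = c" unfolding y_def c_def using rep s t by simp
    have Fsx: "(\<Sum>l\<in>L. F s l * x l) = 0" unfolding x_def using rep diag s by simp
    obtain k where k: "k \<in> L" and xk: "x k \<noteq> 0"
    proof (rule ccontr)
      assume "\<not> thesis"
      then have "\<forall>l\<in>L. x l = 0" using that by blast
      then have "(\<Sum>l\<in>L. F t l * x l) = 0" by simp
      then show False using Fx c by simp
    qed
    obtain G1 where G1: "\<forall>i<n. \<forall>j<n. B' i j = (\<Sum>l\<in>L-{k}. F' i l * G1 l j)"
      using drop_one[OF finL k xk kx rep'] by blast
    define y' where "y' l = y l - y k / x k * x l" for l
    have finL1: "finite (L - {k})" using finL by simp
    have ky': "\<forall>i<n. (\<Sum>l\<in>L-{k}. F' i l * y' l) = 0"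
    proof (intro allI impI)
      fix i assume i: "i < n"
      have e1: "(\<Sum>l\<in>L-{k}. F' i l * y l) = - F' i k * y k"
        using ky i sum.remove[OF finL k, of "\<lambda>l. F' i l * y l"] by (simp add: eq_neg_iff_add_eq_0 add.commute)
      have e2: "(\<Sum>l\<in>L-{k}. F' i l * x l) = - F' i k * x k"
        using kx i sum.remove[OF finL k, of "\<lambda>l. F' i l * x l"] by (simp add: eq_neg_iff_add_eq_0 add.commute)
      have "(\<Sum>l\<in>L-{k}. F' i l * y' l) = (\<Sum>l\<in>L-{k}. F' i l * y l) - (y k / x k) * (\<Sum>l\<in>L-{k}. F' i l * x l)"
        unfolding y'_def by (simp add: sum_subtractf sum_distrib_left algebra_simps)
      also have "\<dots> = 0" using e1 e2 xk by (simp add: field_simps)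
      finally show "(\<Sum>l\<in>L-{k}. F' i l * y' l) = 0" .
    qed
    obtain k2 where k2: "k2 \<in> L - {k}" and yk2: "y' k2 \<noteq> 0"
    proof (rule ccontr)
      assume "\<not> thesis"
      then have "\<forall>l\<in>L-{k}. y' l = 0" using that by blast
      then have z: "(\<Sum>l\<in>L-{k}. F s l * y' l) = 0" by simp
      have e1: "(\<Sum>l\<in>L-{k}. F s l * y l) = c - F s k * y k"
        using Fy sum.remove[OF finL k, of "\<lambda>l. F s l * y l"] by (simp add: algebra_simps)
      have e2: "(\<Sum>l\<in>L-{k}. F s l * x l) = - F s k * x k"
        using Fsx sum.remove[OF finL k, of "\<lambda>l. F s l * x l"] by (simp add: eq_neg_iff_add_eq_0 add.commute)
      have "(\<Sum>l\<in>L-{k}. F s l * y' l) = (\<Sum>l\<in>L-{k}. F s l * y l) - (y k / x k) * (\<Sum>l\<in>L-{k}. F s l * x l)"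
        unfolding y'_def by (simp add: sum_subtractf sum_distrib_left algebra_simps)
      also have "\<dots> = c" using e1 e2 xk by (simp add: field_simps)
      finally show False using z c by simp
    qed
    obtain G2 where G2: "\<forall>i<n. \<forall>j<n. B' i j = (\<Sum>l\<in>L-{k}-{k2}. F' i l * G2 l j)"
      using drop_one[OF finL1 k2 yk2 ky' G1] by blast
    have cardL2: "card (L - {k} - {k2}) = card L - 2"
      using finL k k2 by (simp add: card_Diff_singleton)
    have "2 \<le> card L"
    proof -
      have "{k, k2} \<subseteq> L" using k k2 by blast
      then have "card {k, k2} \<le> card L" using finL card_mono by blast
      then show ?thesis using k2 by simp
    qed
    then have r2: "2 \<le> r" using cardL by simp
    have diag': "\<forall>i<n. B' i i = 0" unfolding B'_def using diag by simp
    have skew': "\<forall>i<n. \<forall>j<n. B' j i = - B' i j"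
    proof (intro allI impI)
      fix i j assume "i < n" "j < n"
      then have "B j i = - B i j" using skew by blast
      then show "B' j i = - B' i j" unfolding B'_def using c by (simp add: field_simps)
    qed
    have "r - 2 < r" using r2 by simp
    moreover have "card (L - {k} - {k2}) \<le> r - 2" using cardL2 cardL by simp
    moreover have "finite (L - {k} - {k2})" using finL by simp
    ultimately obtain u v where uv: "\<forall>i<n. \<forall>j<n. B' i j = (\<Sum>k<(r-2) div 2. u k i * v k j - v k i * u k j)"
      using less.IH[OF _ diag' skew' _ _ G2] by blast
    define m where "m = (r - 2) div 2"
    have rm: "r div 2 = Suc m" unfolding m_def using r2 by (simp add: div_Suc)
    define u' where "u' k i = (if k = m then a i / c else u k i)" for k i
    define v' where "v' k i = (if k = m then b i else v k i)" for k i
    show ?thesis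
    proof (rule exI[of _ u'], rule exI[of _ v'], intro allI impI)
      fix i j assume i: "i < n" and j: "j < n"
      have "(\<Sum>k<r div 2. u' k i * v' k j - v' k i * u' k j)
          = (\<Sum>k<m. u k i * v k j - v k i * u k j) + (a i / c * b j - b i * (a j / c))"
        unfolding rm by (simp add: u'_def v'_def)
      also have "\<dots> = B' i j + (a i / c * b j - b i * (a j / c))" using uv i j unfolding m_def by simp
      also have "\<dots> = B i j" unfolding B'_def using c by (simp add: field_simps)
      finally show "B i j = (\<Sum>k<r div 2. u' k i * v' k j - v' k i * u' k j)" by simp
    qed
  qed
qed

lemma rank_sum2_le:
  fixes F1 G1 F2 G2 :: "nat \<Rightarrow> nat \<Rightarrow> 'a::field"
  assumes "finite K"
  shows "A \<in> carrier_mat n nc \<Longrightarrow> (\<forall>i<n. \<forall>j<nc. A $$ (i,j) = (\<Sum>k\<in>K. F1 i k * G1 k j - F2 i k * G2 k j))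
     \<Longrightarrow> vec_space.rank n A \<le> 2 * card K"
  using assms
proof (induction K arbitrary: A rule: finite_induct)
  case empty
  then have "A = 0\<^sub>m n nc" by (intro eq_matI) auto
  then show ?case using vec_space.rank_0I by simp
next
  case (insert k K)
  define A1 where "A1 = mat n nc (\<lambda>(i,j). \<Sum>l\<in>K. F1 i l * G1 l j - F2 i l * G2 l j)"
  define A2 where "A2 = mat n nc (\<lambda>(i,j). F1 i k * G1 k j)"
  define A3 where "A3 = mat n nc (\<lambda>(i,j). (- F2 i k) * G2 k j)"
  have c1: "A1 \<in> carrier_mat n nc" "A2 \<in> carrier_mat n nc" "A3 \<in> carrier_mat n nc"
    unfolding A1_def A2_def A3_def by auto
  have "A = A1 + (A2 + A3)"
  proof (rule eq_matI)
    fix i j assume "i < dim_row (A1 + (A2 + A3))" "j < dim_col (A1 + (A2 + A3))"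
    then have i: "i < n" and j: "j < nc" using c1 by auto
    have "A $$ (i,j) = (F1 i k * G1 k j - F2 i k * G2 k j) + (\<Sum>l\<in>K. F1 i l * G1 l j - F2 i l * G2 l j)"
      using insert.prems(2) insert.hyps i j by simp
    then show "A $$ (i,j) = (A1 + (A2 + A3)) $$ (i,j)"
      using i j c1 unfolding A1_def A2_def A3_def by simp
  qed (use insert.prems(1) c1 in auto)
  moreover have "vec_space.rank n (A1 + (A2 + A3)) \<le> vec_space.rank n A1 + vec_space.rank n (A2 + A3)"
    by (rule vec_space.rank_subadditive[OF c1(1) add_carrier_mat[OF c1(3), of A2]])
  moreover have "vec_space.rank n (A2 + A3) \<le> vec_space.rank n A2 + vec_space.rank n A3"
    by (rule vec_space.rank_subadditive[OF c1(2,3)])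
  moreover have "vec_space.rank n A1 \<le> 2 * card K"
    using insert.IH[OF c1(1)] unfolding A1_def by auto
  moreover have "vec_space.rank n A2 \<le> 1"
    by (rule vec_space.rank_le_1_product_entries[OF c1(2), of "\<lambda>i. F1 i k" "\<lambda>j. G1 k j"])
      (auto simp: A2_def)
  moreover have "vec_space.rank n A3 \<le> 1"
    by (rule vec_space.rank_le_1_product_entries[OF c1(3), of "\<lambda>i. - F2 i k" "\<lambda>j. G2 k j"])
      (auto simp: A3_def)
  ultimately show ?case using insert.hyps by simp
qed

lemma skew_iff:
  assumes "A \<in> carrier_mat k k"
  shows "transpose_mat A = - A \<longleftrightarrow> (\<forall>i<k. \<forall>j<k. A $$ (j,i) = - A $$ (i,j))"
proof
  assume h: "transpose_mat A = - A"
  show "\<forall>i<k. \<forall>j<k. A $$ (j,i) = - A $$ (i,j)"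
  proof (intro allI impI)
    fix i j assume "i < k" "j < k"
    then show "A $$ (j,i) = - A $$ (i,j)"
      using arg_cong[OF h, of "\<lambda>M. M $$ (i,j)"] assms by auto
  qed
next
  assume h: "\<forall>i<k. \<forall>j<k. A $$ (j,i) = - A $$ (i,j)"
  show "transpose_mat A = - A"
  proof (rule eq_matI)
    fix i j assume "i < dim_row (- A)" "j < dim_col (- A)"
    then have i: "i < k" and j: "j < k" using assms by auto
    have "A $$ (j,i) = - A $$ (i,j)" using h i j by blast
    then show "transpose_mat A $$ (i,j) = (- A) $$ (i,j)" using i j assms by simp
  qed (use assms in auto)
qed

lemma sub_part:
  fixes A :: "'a::field mat"
  assumes "A \<in> skew_rank_var r (m1 + m2)"
  shows "upper_left_block m1 A \<in> skew_rank_var r m1 \<and> lower_right_block m1 m2 A \<in> skew_rank_var r m2"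
proof -
  let ?m = "m1 + m2"
  have A: "A \<in> carrier_mat ?m ?m" and sk: "transpose_mat A = - A"
    and dg: "\<forall>i<?m. A $$ (i,i) = 0" and rk: "vec_space.rank ?m A \<le> r"
    using assms unfolding skew_rank_var_def by auto
  have sk': "\<forall>i<?m. \<forall>j<?m. A $$ (j,i) = - A $$ (i,j)" using sk skew_iff[OF A] by blast
  obtain L :: "nat set" and F G where L: "finite L" "card L \<le> r" and rep: "\<forall>i<?m. \<forall>j<?m. A $$ (i,j) = (\<Sum>l\<in>L. F i l * G l j)"
    using rank_rep[OF A rk] by blast
  define B1 where "B1 = upper_left_block m1 A"
  define B2 where "B2 = lower_right_block m1 m2 A"
  have B1c: "B1 \<in> carrier_mat m1 m1" and B2c: "B2 \<in> carrier_mat m2 m2"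
    unfolding B1_def B2_def upper_left_block_def lower_right_block_def by auto
  have B1e: "B1 $$ (i,j) = A $$ (i,j)" if "i < m1" "j < m1" for i j
    using that unfolding B1_def upper_left_block_def by simp
  have B2e: "B2 $$ (i,j) = A $$ (m1+i,m1+j)" if "i < m2" "j < m2" for i j
    using that unfolding B2_def lower_right_block_def by simp
  have "B1 \<in> skew_rank_var r m1"
    unfolding skew_rank_var_def
  proof (intro CollectI conjI B1c)
    show "transpose_mat B1 = - B1" unfolding skew_iff[OF B1c]
    proof (intro allI impI)
      fix i j assume i: "i < m1" and j: "j < m1"
      then have "i < ?m" "j < ?m" by simp_all
      then have "A $$ (j,i) = - A $$ (i,j)" using sk' by blast
      then show "B1 $$ (j,i) = - B1 $$ (i,j)" using B1e i j by simp
    qed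
    show "\<forall>i<m1. B1 $$ (i,i) = 0" using B1e dg by simp
    have "vec_space.rank m1 B1 \<le> card L"
      by (rule rank_sum_le[OF L(1) B1c, of F G]) (use B1e rep in simp)
    then show "vec_space.rank m1 B1 \<le> r" using L by simp
  qed
  moreover have "B2 \<in> skew_rank_var r m2"
    unfolding skew_rank_var_def
  proof (intro CollectI conjI B2c)
    show "transpose_mat B2 = - B2" unfolding skew_iff[OF B2c]
    proof (intro allI impI)
      fix i j assume i: "i < m2" and j: "j < m2"
      then have "m1 + i < ?m" "m1 + j < ?m" by simp_all
      then have "A $$ (m1+j,m1+i) = - A $$ (m1+i,m1+j)" using sk' by blast
      then show "B2 $$ (j,i) = - B2 $$ (i,j)" using B2e i j by simp
    qed
    show "\<forall>i<m2. B2 $$ (i,i) = 0" using B2e dg by simp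
    have "vec_space.rank m2 B2 \<le> card L"
      by (rule rank_sum_le[OF L(1) B2c, of "\<lambda>i l. F (m1+i) l" "\<lambda>l j. G l (m1+j)"]) (use B2e rep in simp)
    then show "vec_space.rank m2 B2 \<le> r" using L by simp
  qed
  ultimately show ?thesis unfolding B1_def B2_def by simp
qed

lemma decomp_of_var:
  fixes B :: "'a::field mat"
  assumes "B \<in> skew_rank_var r k"
  shows "\<exists>u v. \<forall>i<k. \<forall>j<k. B $$ (i,j) = (\<Sum>q<r div 2. u q i * v q j - v q i * u q j)"
proof -
  have B: "B \<in> carrier_mat k k" and sk: "transpose_mat B = - B"
    and dg: "\<forall>i<k. B $$ (i,i) = 0" and rk: "vec_space.rank k B \<le> r"
    using assms unfolding skew_rank_var_def by auto
  have sk': "\<forall>i<k. \<forall>j<k. B $$ (j,i) = - B $$ (i,j)" using sk skew_iff[OF B] by blast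
  obtain L :: "nat set" and F G where L: "finite L" "card L \<le> r" and rep: "\<forall>i<k. \<forall>j<k. B $$ (i,j) = (\<Sum>l\<in>L. F i l * G l j)"
    using rank_rep[OF B rk] by blast
  show ?thesis
    using alt_decomp[of k "\<lambda>i j. B $$ (i,j)", OF dg sk' L rep] .
qed

theorem lemma4p4:
  fixes m m1 m2 r :: nat
  assumes "even r" and "m = m1 + m2"
  shows "(\<lambda>A :: 'a :: alg_closed_field mat. (upper_left_block m1 A, lower_right_block m1 m2 A))
           ` skew_rank_var r m = skew_rank_var r m1 \<times> skew_rank_var r m2"
proof
  show "(\<lambda>A :: 'a :: alg_closed_field mat. (upper_left_block m1 A, lower_right_block m1 m2 A))
           ` skew_rank_var r m \<subseteq> skew_rank_var r m1 \<times> skew_rank_var r m2"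
    using sub_part[of _ r m1 m2] assms(2) by auto
next
  show "skew_rank_var r m1 \<times> skew_rank_var r m2 \<subseteq> (\<lambda>A :: 'a :: alg_closed_field mat. (upper_left_block m1 A, lower_right_block m1 m2 A))
           ` skew_rank_var r m"
  proof (clarify)
    fix B1 B2 :: "'a mat"
    assume h1: "B1 \<in> skew_rank_var r m1" and h2: "B2 \<in> skew_rank_var r m2"
    obtain u1 v1 where uv1: "\<forall>i<m1. \<forall>j<m1. B1 $$ (i,j) = (\<Sum>q<r div 2. u1 q i * v1 q j - v1 q i * u1 q j)"
      using decomp_of_var[OF h1] by blast
    obtain u2 v2 where uv2: "\<forall>i<m2. \<forall>j<m2. B2 $$ (i,j) = (\<Sum>q<r div 2. u2 q i * v2 q j - v2 q i * u2 q j)"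
      using decomp_of_var[OF h2] by blast
    have B1c: "B1 \<in> carrier_mat m1 m1" using h1 unfolding skew_rank_var_def by auto
    have B2c: "B2 \<in> carrier_mat m2 m2" using h2 unfolding skew_rank_var_def by auto
    define U where "U q i = (if i < m1 then u1 q i else u2 q (i - m1))" for q i
    define V where "V q i = (if i < m1 then v1 q i else v2 q (i - m1))" for q i
    define A where "A = mat m m (\<lambda>(i,j). \<Sum>q<r div 2. U q i * V q j - V q i * U q j)"
    have Ac: "A \<in> carrier_mat m m" unfolding A_def by simp
    have Ae: "A $$ (i,j) = (\<Sum>q<r div 2. U q i * V q j - V q i * U q j)" if "i < m" "j < m" for i j
      using that unfolding A_def by simp
    have "A \<in> skew_rank_var r m"
      unfolding skew_rank_var_def
    proof (intro CollectI conjI Ac)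
      show "transpose_mat A = - A" unfolding skew_iff[OF Ac]
      proof (intro allI impI)
        fix i j assume "i < m" "j < m"
        then show "A $$ (j,i) = - A $$ (i,j)" using Ae
          by (simp add: sum_negf[symmetric] algebra_simps)
      qed
      show "\<forall>i<m. A $$ (i,i) = 0" using Ae by simp
      have "vec_space.rank m A \<le> 2 * card {..<r div 2}"
        by (rule rank_sum2_le[OF _ Ac, of "{..<r div 2}" "\<lambda>i q. U q i" V "\<lambda>i q. V q i" U]) (use Ae in simp_all)
      then show "vec_space.rank m A \<le> r" by simp
    qed
    moreover have "upper_left_block m1 A = B1"
    proof (rule eq_matI)
      fix i j assume "i < dim_row B1" "j < dim_col B1"
      then have "i < m1" "j < m1" using B1c by auto
      then show "upper_left_block m1 A $$ (i,j) = B1 $$ (i,j)"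
        unfolding upper_left_block_def using Ae[of i j] uv1 assms(2) by (simp add: U_def V_def)
    qed (use B1c in \<open>auto simp: upper_left_block_def\<close>)
    moreover have "lower_right_block m1 m2 A = B2"
    proof (rule eq_matI)
      fix i j assume "i < dim_row B2" "j < dim_col B2"
      then have "i < m2" "j < m2" using B2c by auto
      then show "lower_right_block m1 m2 A $$ (i,j) = B2 $$ (i,j)"
        unfolding lower_right_block_def using Ae[of "m1+i" "m1+j"] uv2 assms(2) by (simp add: U_def V_def)
    qed (use B2c in \<open>auto simp: lower_right_block_def\<close>)
    ultimately show "(B1, B2) \<in> (\<lambda>A. (upper_left_block m1 A, lower_right_block m1 m2 A)) ` skew_rank_var r m"
      by (intro image_eqI[of _ _ A]) auto
  qed
qed

end
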